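(* The spectrum of the multiplication operator $\mathcal{M}_F$ on $\mathfrak{M}$ is the segment $$\sigma(\mathcal{M}_F)=\Big[-e^{i\pi/4}\tfrac{1}{\sqrt2},\,e^{i\pi/4}\tfrac{1}{\sqrt2}\Big]=\{(1-\tau)(-e^{i\pi/4}/\sqrt2)+\tau e^{i\pi/4}/\sqrt2:\tau\in[0,1]\}.$$
   Context: $\mathbb{R}^{+}=(0,\infty)$. The model space $\mathfrak{M}$ is the Hilbert space of columns $\begin{bmatrix}\varphi_+\\ \varphi_-\end{bmatrix}$ with $\varphi_\pm\in L^2(\mathbb{R}^{+})$, inner product $\langle\varphi_+,\psi_+\rangle_{L^2(\mathbb{R}^{+})}+\langle\varphi_-,\psi_-\rangle_{L^2(\mathbb{R}^{+})}$. For $\mu>0$, $F(\mu)=\begin{bmatrix}0&F_{+-}(\mu)\\ F_{-+}(\mu)&0\end{bmatrix}$ with $F_{+-}(\mu)=\frac{1}{\sqrt{2\pi}}e^{i\pi/4}e^{-\pi\mu/2}\Gamma(\tfrac12+i\mu)$, $F_{-+}(\mu)=\frac{1}{\sqrt{2\pi}}e^{i\pi/4}e^{\pi\mu/2}\Gamma(\tfrac12-i\mu)$ ($\Gamma$ Euler's Gamma function), and $\mathcal{M}_F$ is the bounded operator $(\mathcal{M}_Fy)(\mu)=F(\mu)y(\mu)$ on $\mathfrak{M}$. *)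

theory Defs
  imports "HOL-Analysis.Analysis"
begin

definition Mpos :: "real measure" where
  "Mpos = restrict_space lborel {0<..}"

text \<open>Representatives of elements of L2(R+) (complex valued).\<close>
definition L2pos :: "(real \<Rightarrow> complex) set" where
  "L2pos = {f. f \<in> borel_measurable Mpos \<and> integrable Mpos (\<lambda>x. (cmod (f x))\<^sup>2)}"

text \<open>The model space: columns (phi_plus, phi_minus) of L2(R+) functions.\<close>
type_synonym mvec = "(real \<Rightarrow> complex) \<times> (real \<Rightarrow> complex)"

definition Mspace :: "mvec set" where
  "Mspace = {y. fst y \<in> L2pos \<and> snd y \<in> L2pos}"

definition mnorm :: "mvec \<Rightarrow> real" where
  "mnorm y = sqrt ((\<integral>x. (cmod (fst y x))\<^sup>2 \<partial>Mpos) + (\<integral>x. (cmod (snd y x))\<^sup>2 \<partial>Mpos))"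

definition meq :: "mvec \<Rightarrow> mvec \<Rightarrow> bool" where
  "meq y z \<longleftrightarrow> (AE x in Mpos. fst y x = fst z x \<and> snd y x = snd z x)"

definition madd :: "mvec \<Rightarrow> mvec \<Rightarrow> mvec" where
  "madd y z = ((\<lambda>x. fst y x + fst z x), (\<lambda>x. snd y x + snd z x))"

definition mscale :: "complex \<Rightarrow> mvec \<Rightarrow> mvec" where
  "mscale a y = ((\<lambda>x. a * fst y x), (\<lambda>x. a * snd y x))"

definition Fpm :: "real \<Rightarrow> complex" where
  "Fpm \<mu> = complex_of_real (1 / sqrt (2 * pi)) * cis (pi / 4) * complex_of_real (exp (- pi * \<mu> / 2))
           * Gamma (1/2 + \<i> * complex_of_real \<mu>)"

definition Fmp :: "real \<Rightarrow> complex" where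
  "Fmp \<mu> = complex_of_real (1 / sqrt (2 * pi)) * cis (pi / 4) * complex_of_real (exp (pi * \<mu> / 2))
           * Gamma (1/2 - \<i> * complex_of_real \<mu>)"

text \<open>The multiplication operator M_F, with F = [[0, F+-],[F-+, 0]].\<close>
definition MF :: "mvec \<Rightarrow> mvec" where
  "MF y = ((\<lambda>\<mu>. Fpm \<mu> * snd y \<mu>), (\<lambda>\<mu>. Fmp \<mu> * fst y \<mu>))"

definition MF_resolvent :: "complex \<Rightarrow> bool" where
  "MF_resolvent lam \<longleftrightarrow>
     (\<exists>S :: mvec \<Rightarrow> mvec.
        (\<forall>z\<in>Mspace. S z \<in> Mspace) \<and>
        (\<forall>z1\<in>Mspace. \<forall>z2\<in>Mspace. meq z1 z2 \<longrightarrow> meq (S z1) (S z2)) \<and>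
        (\<forall>a. \<forall>z1\<in>Mspace. \<forall>z2\<in>Mspace.
            meq (S (madd (mscale a z1) z2)) (madd (mscale a (S z1)) (S z2))) \<and>
        (\<exists>C. \<forall>z\<in>Mspace. mnorm (S z) \<le> C * mnorm z) \<and>
        (\<forall>y\<in>Mspace. meq (S (madd (MF y) (mscale (- lam) y))) y) \<and>
        (\<forall>z\<in>Mspace. meq (madd (MF (S z)) (mscale (- lam) (S z))) z))"

definition MF_spectrum :: "complex set" where
  "MF_spectrum = {lam. \<not> MF_resolvent lam}"

end

theory Submission
  imports Defs
begin

lemma sin_half_line: "sin (of_real pi * (1/2 + \<i> * of_real \<mu>)) = complex_of_real (cosh (pi * \<mu>))"
proof -
  have "of_real pi * (1/2 + \<i> * of_real \<mu>) = of_real (pi/2) + \<i> * of_real (pi*\<mu>)"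
    by (simp add: algebra_simps)
  hence "sin (of_real pi * (1/2 + \<i> * of_real \<mu>)) = cos (\<i> * of_real (pi*\<mu>))"
    by (simp add: sin_add cos_of_real sin_of_real)
  also have "\<dots> = of_real ((exp (pi*\<mu>) + inverse (exp (pi*\<mu>))) / 2)"
    by (rule cosh_real[symmetric])
  also have "\<dots> = of_real (cosh (pi*\<mu>))"
    by (simp add: cosh_def exp_minus)
  finally show ?thesis .
qed

lemma Gamma_prod: "Gamma (1/2 + \<i> * complex_of_real \<mu>) * Gamma (1/2 - \<i> * complex_of_real \<mu>) = of_real (pi / cosh (pi*\<mu>))"
proof -
  have "1 - (1/2 + \<i> * complex_of_real \<mu>) = 1/2 - \<i> * complex_of_real \<mu>" by simp
  thus ?thesis using Gamma_reflection_complex[of "1/2 + \<i> * complex_of_real \<mu>"] sin_half_line[of \<mu>]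
    by simp
qed

lemma Gamma_cnj_half: "Gamma (1/2 - \<i> * complex_of_real \<mu>) = cnj (Gamma (1/2 + \<i> * complex_of_real \<mu>))"
  by (simp add: cnj_Gamma)

lemma Gamma_norm2: "(cmod (Gamma (1/2 + \<i> * complex_of_real \<mu>)))\<^sup>2 = pi / cosh (pi*\<mu>)"
proof -
  have "complex_of_real ((cmod (Gamma (1/2 + \<i> * complex_of_real \<mu>)))\<^sup>2) = of_real (pi / cosh (pi*\<mu>))"
    using Gamma_prod[of \<mu>] complex_norm_square[of "Gamma (1/2 + \<i> * complex_of_real \<mu>)"] by (simp add: Gamma_cnj_half)
  thus ?thesis using of_real_eq_iff by blast
qed

lemma FF: "Fpm \<mu> * Fmp \<mu> = \<i> / complex_of_real (2 * cosh (pi * \<mu>))"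
proof -
  have "Fpm \<mu> * Fmp \<mu> = complex_of_real (1 / sqrt (2 * pi))^2 * (cis (pi/4))^2 *
     complex_of_real (exp (- pi * \<mu> / 2) * exp (pi * \<mu> / 2)) *
     (Gamma (1/2 + \<i> * complex_of_real \<mu>) * Gamma (1/2 - \<i> * complex_of_real \<mu>))"
    unfolding Fpm_def Fmp_def by (simp add: power2_eq_square)
  also have "\<dots> = complex_of_real (1/(2*pi)) * \<i> * of_real (pi / cosh (pi*\<mu>))"
  proof -
    have c: "(cis (pi/4))^2 = \<i>"
    proof -
      have "(cis (pi/4))^2 = cis (pi/4 + pi/4)" by (simp add: power2_eq_square cis_mult)
      also have "\<dots> = cis (pi/2)" by simp
      also have "\<dots> = \<i>" by (simp add: complex_eq_iff)
      finally show ?thesis .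
    qed
    have s: "complex_of_real (1 / sqrt (2 * pi))^2 = complex_of_real (1/(2*pi))"
      by (simp flip: of_real_power add: power_divide)
    show ?thesis by (simp only: c s Gamma_prod exp_add[symmetric]) simp
  qed
  also have "\<dots> = \<i> / complex_of_real (2 * cosh (pi * \<mu>))"
    by (simp add: field_simps)
  finally show ?thesis .
qed

lemma normFpm2: "(cmod (Fpm \<mu>))\<^sup>2 = exp (- pi * \<mu>) / (2 * cosh (pi*\<mu>))"
proof -
  have "(cmod (Fpm \<mu>))\<^sup>2 = (1 / sqrt (2 * pi))^2 * (exp (- pi * \<mu> / 2))^2 * (cmod (Gamma (1/2 + \<i> * complex_of_real \<mu>)))\<^sup>2"
    unfolding Fpm_def by (simp add: norm_mult norm_divide power_mult_distrib power_divide)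
  also have "\<dots> = exp (- pi * \<mu>) / (2 * cosh (pi*\<mu>))"
  proof -
    have e: "(exp (- pi * \<mu> / 2))^2 = exp (- pi * \<mu>)" by (simp add: power2_eq_square mult_exp_exp)
    have r: "(1 / sqrt (2 * pi))^2 = 1/(2*pi)" by (simp add: power_divide)
    show ?thesis by (simp only: Gamma_norm2 e r) (simp add: field_simps)
  qed
  finally show ?thesis .
qed

lemma normFmp2: "(cmod (Fmp \<mu>))\<^sup>2 = exp (pi * \<mu>) / (2 * cosh (pi*\<mu>))"
proof -
  have "(cmod (Fmp \<mu>))\<^sup>2 = (1 / sqrt (2 * pi))^2 * (exp (pi * \<mu> / 2))^2 * (cmod (Gamma (1/2 - \<i> * complex_of_real \<mu>)))\<^sup>2"
    unfolding Fmp_def by (simp add: norm_mult norm_divide power_mult_distrib power_divide)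
  also have "\<dots> = exp (pi * \<mu>) / (2 * cosh (pi*\<mu>))"
  proof -
    have e: "(exp (pi * \<mu> / 2))^2 = exp (pi * \<mu>)" by (simp add: power2_eq_square mult_exp_exp)
    have r: "(1 / sqrt (2 * pi))^2 = 1/(2*pi)" by (simp add: power_divide)
    show ?thesis by (simp only: Gamma_cnj_half complex_mod_cnj Gamma_norm2 e r) (simp add: field_simps)
  qed
  finally show ?thesis .
qed


lemma half_notin: "Re z = 1/2 \<Longrightarrow> z \<notin> \<int>\<^sub>\<le>\<^sub>0"
proof
  assume "Re z = 1/2" "z \<in> \<int>\<^sub>\<le>\<^sub>0"
  then obtain m where "z = of_int m" by (auto elim!: nonpos_Ints_cases)
  hence "real_of_int m = 1/2" using \<open>Re z = 1/2\<close> by simp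
  hence "real_of_int (2*m) = 1" by simp
  hence "2*m = 1" by linarith
  thus False by presburger
qed

lemma Fpm_cont: "continuous_on UNIV Fpm"
  unfolding Fpm_def by (intro continuous_at_imp_continuous_on ballI continuous_intros half_notin) auto

lemma Fmp_cont: "continuous_on UNIV Fmp"
  unfolding Fmp_def by (intro continuous_at_imp_continuous_on ballI continuous_intros half_notin) auto

lemma meas_Mpos: "continuous_on UNIV (f::real \<Rightarrow> complex) \<Longrightarrow> f \<in> borel_measurable Mpos"
  unfolding Mpos_def
  by (intro measurable_restrict_space1) (simp add: borel_measurable_continuous_onI)

lemma Fpm_meas[measurable]: "Fpm \<in> borel_measurable Mpos" by (rule meas_Mpos[OF Fpm_cont])
lemma Fmp_meas[measurable]: "Fmp \<in> borel_measurable Mpos" by (rule meas_Mpos[OF Fmp_cont])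

lemma L2_bound:
  fixes f :: "real \<Rightarrow> complex"
  assumes "integrable Mpos h" "f \<in> borel_measurable Mpos" "\<And>x. (cmod (f x))\<^sup>2 \<le> h x"
  shows "f \<in> L2pos" "(\<integral>x. (cmod (f x))\<^sup>2 \<partial>Mpos) \<le> (\<integral>x. h x \<partial>Mpos)"
proof -
  have m: "(\<lambda>x. (cmod (f x))\<^sup>2) \<in> borel_measurable Mpos" using assms(2) by measurable
  have i: "integrable Mpos (\<lambda>x. (cmod (f x))\<^sup>2)"
  proof (rule Bochner_Integration.integrable_bound[OF assms(1) m])
    show "AE x in Mpos. norm ((cmod (f x))\<^sup>2) \<le> norm (h x)"
      using assms(3) by (auto intro!: AE_I2 order_trans[OF _ abs_ge_self])
  qed
  show "f \<in> L2pos" using i assms(2) by (simp add: L2pos_def)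
  show "(\<integral>x. (cmod (f x))\<^sup>2 \<partial>Mpos) \<le> (\<integral>x. h x \<partial>Mpos)"
    using i assms by (intro integral_mono) auto
qed

lemma sq_integrable: "f \<in> L2pos \<Longrightarrow> integrable Mpos (\<lambda>x. (cmod (f x))\<^sup>2)"
  by (simp add: L2pos_def)

lemma L2_meas: "f \<in> L2pos \<Longrightarrow> f \<in> borel_measurable Mpos"
  by (simp add: L2pos_def)

lemma meq_mnorm: assumes "meq y z" "y \<in> Mspace" "z \<in> Mspace" shows "mnorm y = mnorm z"
proof -
  have a: "AE x in Mpos. fst y x = fst z x" "AE x in Mpos. snd y x = snd z x"
    using assms(1) unfolding meq_def by (auto elim: eventually_mono)
  have "(\<integral>x. (cmod (fst y x))\<^sup>2 \<partial>Mpos) = (\<integral>x. (cmod (fst z x))\<^sup>2 \<partial>Mpos)"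
    using assms(2,3) a(1) by (intro integral_cong_AE) (auto simp: Mspace_def L2pos_def elim: eventually_mono)
  moreover have "(\<integral>x. (cmod (snd y x))\<^sup>2 \<partial>Mpos) = (\<integral>x. (cmod (snd z x))\<^sup>2 \<partial>Mpos)"
    using assms(2,3) a(2) by (intro integral_cong_AE) (auto simp: Mspace_def L2pos_def elim: eventually_mono)
  ultimately show ?thesis by (simp add: mnorm_def)
qed

lemma indicator_Mpos:
  assumes "0 < a" "a \<le> b"
  shows "integrable Mpos (indicator {a..b} :: real \<Rightarrow> real)"
        "(\<integral>x. indicator {a..b} x \<partial>Mpos) = b - a"
proof -
  have e: "(\<lambda>x. indicator {0<..} x * (indicator {a..b} x :: real)) = indicator {a..b}"
    using assms by (auto simp: indicator_def fun_eq_iff)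
  have il: "integrable lborel (indicator {a..b} :: real \<Rightarrow> real)"
    using borel_integrable_compact[of "{a..b}" "\<lambda>_. 1::real"] by simp
  show "integrable Mpos (indicator {a..b} :: real \<Rightarrow> real)"
    unfolding Mpos_def by (subst integrable_restrict_space) (auto simp: e il)
  show "(\<integral>x. indicator {a..b} x \<partial>Mpos) = b - a"
    unfolding Mpos_def using assms by (subst integral_restrict_space) (auto simp: e)
qed



definition cc :: complex where "cc = cis (pi / 4) / complex_of_real (sqrt 2)"

lemma cc_sq: "cc^2 = \<i>/2"
proof -
  have c: "(cis (pi/4))^2 = \<i>"
  proof -
    have "(cis (pi/4))^2 = cis (pi/4 + pi/4)" by (simp add: power2_eq_square cis_mult)
    also have "\<dots> = cis (pi/2)" by simp
    also have "\<dots> = \<i>" by (simp add: complex_eq_iff)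
    finally show ?thesis .
  qed
  have s: "(complex_of_real (sqrt 2))^2 = 2" by (simp flip: of_real_power)
  show ?thesis unfolding cc_def by (simp only: power_divide c s)
qed

lemma seg_iff: "x \<in> closed_segment (- cc) cc \<longleftrightarrow> (\<exists>r. -1 \<le> r \<and> r \<le> 1 \<and> x = of_real r * cc)"
proof
  assume "x \<in> closed_segment (- cc) cc"
  then obtain u where u: "0 \<le> u" "u \<le> 1" "x = (1 - u) *\<^sub>R (-cc) + u *\<^sub>R cc"
    by (auto simp: closed_segment_def)
  hence "x = of_real (2*u - 1) * cc" by (simp add: scaleR_conv_of_real algebra_simps)
  thus "\<exists>r. -1 \<le> r \<and> r \<le> 1 \<and> x = of_real r * cc" using u by (intro exI[of _ "2*u-1"]) auto
next
  assume "\<exists>r. -1 \<le> r \<and> r \<le> 1 \<and> x = of_real r * cc"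
  then obtain r where r: "-1 \<le> r" "r \<le> 1" "x = of_real r * cc" by auto
  have "x = (1 - (r+1)/2) *\<^sub>R (-cc) + ((r+1)/2) *\<^sub>R cc"
    using r by (simp add: scaleR_conv_of_real field_simps)
  thus "x \<in> closed_segment (- cc) cc" using r unfolding closed_segment_def
    by (intro CollectI exI[of _ "(r+1)/2"]) auto
qed

lemma two_cosh: "2 * cosh (x::real) = exp x + exp (-x)"
  by (simp add: cosh_def exp_minus)


lemma normFpm_le: "cmod (Fpm \<mu>) \<le> 1"
proof -
  have "(cmod (Fpm \<mu>))\<^sup>2 \<le> 1"
    unfolding normFpm2 using two_cosh[of "pi*\<mu>"] exp_gt_zero[of "pi*\<mu>"] exp_gt_zero[of "-pi*\<mu>"]
    by (simp add: divide_le_eq) (meson add_nonneg_nonneg exp_ge_zero not_le)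
  thus ?thesis by (simp add: power_le_one_iff abs_le_square_iff)
qed

lemma normFmp_le: "cmod (Fmp \<mu>) \<le> 1"
proof -
  have "(cmod (Fmp \<mu>))\<^sup>2 \<le> 1"
    unfolding normFmp2 using two_cosh[of "pi*\<mu>"] exp_gt_zero[of "pi*\<mu>"] exp_gt_zero[of "-pi*\<mu>"]
    by (simp add: divide_le_eq) (meson add_nonneg_nonneg exp_ge_zero not_le)
  thus ?thesis by (simp add: power_le_one_iff abs_le_square_iff)
qed

lemma delta_bound:
  assumes "lam \<notin> closed_segment (- cc) cc"
  shows "\<exists>\<delta>>0. \<forall>\<mu>. \<delta> \<le> cmod (lam^2 - Fpm \<mu> * Fmp \<mu>)"
proof -
  define K where "K = (\<lambda>h. \<i> * complex_of_real h) ` {0..1/2}"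
  have "compact K" unfolding K_def by (intro compact_continuous_image continuous_intros) auto
  hence cl: "closed K" by (rule compact_imp_closed)
  have nK: "lam^2 \<notin> K"
  proof
    assume "lam^2 \<in> K"
    then obtain h where h: "0 \<le> h" "h \<le> 1/2" "lam^2 = \<i> * of_real h" by (auto simp: K_def)
    define w where "w = of_real (sqrt (2*h)) * cc"
    have "w^2 = of_real ((sqrt (2*h))^2) * cc^2" by (simp add: w_def power_mult_distrib)
    also have "\<dots> = \<i> * of_real h" using h by (simp add: cc_sq)
    finally have "lam = w \<or> lam = -w" using h power2_eq_iff by metis
    moreover have "sqrt (2*h) \<le> 1" using h by (simp add: real_sqrt_le_1_iff)
    ultimately have "\<exists>r. -1 \<le> r \<and> r \<le> 1 \<and> lam = of_real r * cc"
    proof (elim disjE)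
      assume "lam = w" "sqrt (2*h) \<le> 1"
      thus ?thesis unfolding w_def by (intro exI[of _ "sqrt (2*h)"]) (auto intro: order_trans[OF _ real_sqrt_ge_zero] simp: h)
    next
      assume "lam = -w" "sqrt (2*h) \<le> 1"
      thus ?thesis unfolding w_def by (intro exI[of _ "- sqrt (2*h)"]) (auto intro: order_trans[OF _ real_sqrt_ge_zero] simp: h)
    qed
    thus False using assms seg_iff by blast
  qed
  obtain \<delta> where d: "\<delta> > 0" "\<forall>x\<in>K. \<delta> \<le> dist (lam^2) x"
    using separate_point_closed[OF cl nK] by blast
  have "\<delta> \<le> cmod (lam^2 - Fpm \<mu> * Fmp \<mu>)" for \<mu>
  proof -
    have c1: "1 \<le> cosh (pi*\<mu>)" by (rule cosh_real_ge_1)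
    have "Fpm \<mu> * Fmp \<mu> = \<i> * of_real (1 / (2 * cosh (pi*\<mu>)))" by (simp add: FF)
    moreover have "1 / (2 * cosh (pi*\<mu>)) \<in> {0..1/2}" using c1 by (auto simp: field_simps)
    ultimately have "Fpm \<mu> * Fmp \<mu> \<in> K" unfolding K_def by blast
    thus ?thesis using d by (simp add: dist_norm)
  qed
  thus ?thesis using d(1) by blast
qed



lemma pw:
  fixes u p a b d :: complex
  assumes "cmod p \<le> 1" "0 < \<delta>" "\<delta> \<le> cmod d"
  shows "(cmod ((u*a + p*b)/d))^2 \<le> 2*((cmod u + 1)/\<delta>)^2 * ((cmod a)^2 + (cmod b)^2)"
proof -
  have n1: "cmod (u*a + p*b) \<le> (cmod u + 1) * (cmod a + cmod b)"
  proof -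
    have "cmod (u*a + p*b) \<le> cmod u * cmod a + cmod p * cmod b"
      by (metis norm_mult norm_triangle_ineq)
    also have "\<dots> \<le> cmod u * cmod a + 1 * cmod b"
      using assms(1) by (intro add_left_mono mult_right_mono) auto
    also have "\<dots> \<le> (cmod u + 1) * (cmod a + cmod b)"
      by (simp add: algebra_simps)
    finally show ?thesis .
  qed
  have "cmod ((u*a + p*b)/d) = cmod (u*a + p*b) / cmod d" by (simp add: norm_divide)
  also have "\<dots> \<le> cmod (u*a + p*b) / \<delta>" using assms by (intro divide_left_mono) (auto intro!: mult_pos_pos)
  also have "\<dots> \<le> (cmod u + 1)/\<delta> * (cmod a + cmod b)" using n1 assms(2) by (simp add: field_simps)
  finally have n2: "cmod ((u*a + p*b)/d) \<le> (cmod u + 1)/\<delta> * (cmod a + cmod b)" .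
  have "(cmod ((u*a + p*b)/d))^2 \<le> ((cmod u + 1)/\<delta> * (cmod a + cmod b))^2"
    using n2 by (intro power_mono) auto
  also have "\<dots> = ((cmod u + 1)/\<delta>)^2 * (cmod a + cmod b)^2" by (simp only: power_mult_distrib)
  also have "\<dots> \<le> ((cmod u + 1)/\<delta>)^2 * (2*((cmod a)^2 + (cmod b)^2))"
  proof (intro mult_left_mono)
    show "(cmod a + cmod b)^2 \<le> 2*((cmod a)^2 + (cmod b)^2)"
      using sum_squares_ge_zero[of "cmod a - cmod b" 0] by (simp add: power2_eq_square algebra_simps)
  qed auto
  finally show ?thesis by (simp add: algebra_simps)
qed

lemma alg_r:
  fixes l p q a b d :: complex
  assumes "d \<noteq> 0" "d = l^2 - p*q"
  shows "p * (((-l)*b + q*(-a))/d) + (-l)*(((-l)*a + p*(-b))/d) = a"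
    and "q * (((-l)*a + p*(-b))/d) + (-l)*(((-l)*b + q*(-a))/d) = b"
proof -
  have "p * (((-l)*b + q*(-a))/d) + (-l)*(((-l)*a + p*(-b))/d) = (p*((-l)*b + q*(-a)) + (-l)*((-l)*a + p*(-b)))/d"
    using assms(1) by (simp add: field_simps)
  also have "p*((-l)*b + q*(-a)) + (-l)*((-l)*a + p*(-b)) = d * a" unfolding assms(2) by algebra
  finally show "p * (((-l)*b + q*(-a))/d) + (-l)*(((-l)*a + p*(-b))/d) = a" using assms(1) by simp
  have "q * (((-l)*a + p*(-b))/d) + (-l)*(((-l)*b + q*(-a))/d) = (q*((-l)*a + p*(-b)) + (-l)*((-l)*b + q*(-a)))/d"
    using assms(1) by (simp add: field_simps)
  also have "q*((-l)*a + p*(-b)) + (-l)*((-l)*b + q*(-a)) = d * b" unfolding assms(2) by algebra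
  finally show "q * (((-l)*a + p*(-b))/d) + (-l)*(((-l)*b + q*(-a))/d) = b" using assms(1) by simp
qed

lemma resolvent_outside:
  assumes "lam \<notin> closed_segment (- cc) cc"
  shows "MF_resolvent lam"
proof -
  define D where "D \<mu> = lam^2 - Fpm \<mu> * Fmp \<mu>" for \<mu>
  obtain \<delta> where d: "\<delta> > 0" "\<And>\<mu>. \<delta> \<le> cmod (D \<mu>)"
    using delta_bound[OF assms] unfolding D_def by blast
  have Dnz: "D \<mu> \<noteq> 0" for \<mu> using d[of] by (metis norm_zero not_le)
  define S :: "mvec \<Rightarrow> mvec" where "S z = ((\<lambda>\<mu>. ((-lam) * fst z \<mu> + Fpm \<mu> * (- snd z \<mu>)) / D \<mu>),
     (\<lambda>\<mu>. ((-lam) * snd z \<mu> + Fmp \<mu> * (- fst z \<mu>)) / D \<mu>))" for z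
  define K where "K = 2*((cmod (-lam) + 1)/\<delta>)^2"
  have K0: "0 \<le> K" by (simp add: K_def)
  have Dm[measurable]: "D \<in> borel_measurable Mpos" unfolding D_def by measurable
  have bnd1: "(cmod (fst (S z) x))^2 \<le> K * ((cmod (fst z x))^2 + (cmod (snd z x))^2)" for z x
    unfolding S_def K_def using pw[OF normFpm_le d(1) d(2)[of x], where u="-lam" and a="fst z x" and b="- snd z x"] by simp
  have bnd2: "(cmod (snd (S z) x))^2 \<le> K * ((cmod (fst z x))^2 + (cmod (snd z x))^2)" for z x
    unfolding S_def K_def using pw[OF normFmp_le d(1) d(2)[of x], where u="-lam" and a="snd z x" and b="- fst z x"] by (simp add: add.commute)
  have hint: "integrable Mpos (\<lambda>x. K * ((cmod (fst z x))^2 + (cmod (snd z x))^2))"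
    and hval: "(\<integral>x. K * ((cmod (fst z x))^2 + (cmod (snd z x))^2) \<partial>Mpos)
       = K * ((\<integral>x. (cmod (fst z x))^2 \<partial>Mpos) + (\<integral>x. (cmod (snd z x))^2 \<partial>Mpos))"
    if "z \<in> Mspace" for z
  proof -
    have i1: "integrable Mpos (\<lambda>x. (cmod (fst z x))^2)" "integrable Mpos (\<lambda>x. (cmod (snd z x))^2)"
      using that by (auto simp: Mspace_def L2pos_def)
    show "integrable Mpos (\<lambda>x. K * ((cmod (fst z x))^2 + (cmod (snd z x))^2))"
      using i1 by (intro integrable_mult_right Bochner_Integration.integrable_add)
    show "(\<integral>x. K * ((cmod (fst z x))^2 + (cmod (snd z x))^2) \<partial>Mpos)
       = K * ((\<integral>x. (cmod (fst z x))^2 \<partial>Mpos) + (\<integral>x. (cmod (snd z x))^2 \<partial>Mpos))"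
      using i1 by (simp add: Bochner_Integration.integral_add)
  qed
  have meas: "fst (S z) \<in> borel_measurable Mpos \<and> snd (S z) \<in> borel_measurable Mpos" if "z \<in> Mspace" for z
  proof -
    have [measurable]: "fst z \<in> borel_measurable Mpos" "snd z \<in> borel_measurable Mpos"
      using that by (auto simp: Mspace_def L2pos_def)
    show ?thesis unfolding S_def by simp measurable
  qed
  have L1: "fst (S z) \<in> L2pos \<and> (\<integral>x. (cmod (fst (S z) x))^2 \<partial>Mpos) \<le> K * ((\<integral>x. (cmod (fst z x))^2 \<partial>Mpos) + (\<integral>x. (cmod (snd z x))^2 \<partial>Mpos))"
    if "z \<in> Mspace" for z
    using L2_bound[OF hint[OF that], of "fst (S z)"] meas[OF that] bnd1[of z] hval[OF that] by auto
  have L2: "snd (S z) \<in> L2pos \<and> (\<integral>x. (cmod (snd (S z) x))^2 \<partial>Mpos) \<le> K * ((\<integral>x. (cmod (fst z x))^2 \<partial>Mpos) + (\<integral>x. (cmod (snd z x))^2 \<partial>Mpos))"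
    if "z \<in> Mspace" for z
    using L2_bound[OF hint[OF that], of "snd (S z)"] meas[OF that] bnd2[of z] hval[OF that] by auto
  show ?thesis unfolding MF_resolvent_def
  proof (intro exI[of _ S] conjI ballI allI impI)
    fix z assume "z \<in> Mspace" thus "S z \<in> Mspace" using L1 L2 by (simp add: Mspace_def)
  next
    fix z1 z2 assume "z1 \<in> Mspace" "z2 \<in> Mspace" "meq z1 z2" thus "meq (S z1) (S z2)"
      unfolding meq_def S_def by (auto elim: eventually_mono)
  next
    fix a z1 z2 assume "z1 \<in> Mspace" "z2 \<in> Mspace"
    show "meq (S (madd (mscale a z1) z2)) (madd (mscale a (S z1)) (S z2))"
      unfolding meq_def S_def madd_def mscale_def
      by (intro AE_I2) (simp add: Dnz field_simps)
  next
    show "\<exists>C. \<forall>z\<in>Mspace. mnorm (S z) \<le> C * mnorm z"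
    proof (intro exI[of _ "sqrt (2*K)"] ballI)
      fix z assume z: "z \<in> Mspace"
      define A where "A = (\<integral>x. (cmod (fst z x))^2 \<partial>Mpos)"
      define B where "B = (\<integral>x. (cmod (snd z x))^2 \<partial>Mpos)"
      have "(\<integral>x. (cmod (fst (S z) x))^2 \<partial>Mpos) + (\<integral>x. (cmod (snd (S z) x))^2 \<partial>Mpos) \<le> (2*K) * (A + B)"
        using L1[OF z] L2[OF z] unfolding A_def B_def by simp
      hence "mnorm (S z) \<le> sqrt ((2*K) * (A + B))" unfolding mnorm_def by simp
      also have "\<dots> = sqrt (2*K) * mnorm z" unfolding mnorm_def A_def B_def by (simp add: real_sqrt_mult)
      finally show "mnorm (S z) \<le> sqrt (2*K) * mnorm z" .
    qed
  next
    fix y assume "y \<in> Mspace"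
    show "meq (S (madd (MF y) (mscale (- lam) y))) y"
      unfolding meq_def S_def madd_def mscale_def MF_def
      using Dnz unfolding D_def by (intro AE_I2) (simp add: field_simps power2_eq_square)
  next
    fix z assume "z \<in> Mspace"
    show "meq (madd (MF (S z)) (mscale (- lam) (S z))) z"
      unfolding meq_def S_def madd_def mscale_def MF_def
      using alg_r[OF Dnz D_def] by (intro AE_I2) simp
  qed
qed



definition gg :: "real \<Rightarrow> real" where "gg \<mu> = 1 / sqrt (2 * cosh (pi * \<mu>))"

lemma gg_cont: "isCont gg x"
  unfolding gg_def by (intro continuous_intros) (auto simp: add_pos_pos)

lemma gg_sq: "(gg \<mu>)^2 = 1 / (2 * cosh (pi * \<mu>))"
  unfolding gg_def by (simp add: power_divide)

lemma approx_real:
  assumes "0 \<le> t" "t \<le> 1 / sqrt 2" "0 < \<epsilon>"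
  shows "\<exists>\<alpha> \<beta>. 0 < \<alpha> \<and> \<alpha> < \<beta> \<and> (\<forall>\<mu>\<in>{\<alpha>..\<beta>}. \<bar>gg \<mu> - t\<bar> \<le> \<epsilon>)"
proof -
  define t1 where "t1 = (if t > 0 then t else min (\<epsilon>/2) (1 / sqrt 2))"
  have t1: "0 < t1" "t1 \<le> 1 / sqrt 2" "\<bar>t1 - t\<bar> \<le> \<epsilon>/2"
    using assms by (auto simp: t1_def)
  have "t1^2 \<le> (1/sqrt 2)^2" using t1 by (intro power_mono) auto
  hence t1sq: "t1^2 \<le> 1/2" by (simp add: power_divide)
  have ge1: "1 \<le> 1 / (2 * t1^2)" using t1sq t1(1) by (simp add: field_simps)
  define \<mu>0 where "\<mu>0 = arcosh (1 / (2 * t1^2)) / pi"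
  have mu0: "0 \<le> \<mu>0" using ge1 by (simp add: \<mu>0_def)
  have "cosh (pi * \<mu>0) = 1 / (2 * t1^2)" using ge1 by (simp add: \<mu>0_def)
  hence "gg \<mu>0 = 1 / sqrt (1 / t1^2)" unfolding gg_def by simp
  also have "\<dots> = t1" using t1(1) by (simp add: real_sqrt_divide)
  finally have g0: "gg \<mu>0 = t1" .
  obtain s where s: "s > 0" "\<And>x. x \<noteq> \<mu>0 \<and> norm (x - \<mu>0) < s \<longrightarrow> norm (gg x - gg \<mu>0) < \<epsilon>/2"
    using LIM_D[OF gg_cont[unfolded isCont_def], of "\<epsilon>/2" \<mu>0] assms(3) by auto
  have "\<forall>\<mu>\<in>{\<mu>0 + s/4..\<mu>0 + s/2}. \<bar>gg \<mu> - t\<bar> \<le> \<epsilon>"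
  proof
    fix \<mu> assume "\<mu> \<in> {\<mu>0 + s/4..\<mu>0 + s/2}"
    hence "\<mu> \<noteq> \<mu>0 \<and> norm (\<mu> - \<mu>0) < s" using s(1) by auto
    hence "\<bar>gg \<mu> - t1\<bar> < \<epsilon>/2" using s(2) g0 by auto
    thus "\<bar>gg \<mu> - t\<bar> \<le> \<epsilon>" using t1(3) by linarith
  qed
  moreover have "0 < \<mu>0 + s/4" "\<mu>0 + s/4 < \<mu>0 + s/2" using mu0 s(1) by auto
  ultimately show ?thesis by blast
qed



lemma cis4_sq: "(cis (pi/4))^2 = \<i>"
proof -
  have "(cis (pi/4))^2 = cis (pi/4 + pi/4)" by (simp add: power2_eq_square cis_mult)
  also have "\<dots> = cis (pi/2)" by simp
  also have "\<dots> = \<i>" by (simp add: complex_eq_iff)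
  finally show ?thesis .
qed

lemma id_Mpos[measurable]: "(\<lambda>x::real. x) \<in> borel_measurable Mpos"
  unfolding Mpos_def by (intro measurable_restrict_space1) simp

lemma inside_not_resolvent:
  assumes "lam \<in> closed_segment (- cc) cc"
  shows "\<not> MF_resolvent lam"
proof
  assume "MF_resolvent lam"
  then obtain S C where
    Sm: "\<And>z. z \<in> Mspace \<Longrightarrow> S z \<in> Mspace" and
    SC: "\<And>z. z \<in> Mspace \<Longrightarrow> mnorm (S z) \<le> C * mnorm z" and
    Sinv: "\<And>y. y \<in> Mspace \<Longrightarrow> meq (S (madd (MF y) (mscale (- lam) y))) y"
    unfolding MF_resolvent_def by blast
  obtain r where r: "-1 \<le> r" "r \<le> 1" "lam = of_real r * cc" using assms seg_iff by blast
  define \<sigma> :: real where "\<sigma> = (if r \<ge> 0 then 1 else -1)"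
  define t where "t = \<bar>r\<bar> / sqrt 2"
  have t: "0 \<le> t" "t \<le> 1 / sqrt 2" using r by (auto simp: t_def divide_right_mono)
  have lam_eq: "lam = of_real (\<sigma> * t) * cis (pi/4)"
    unfolding r(3) cc_def \<sigma>_def t_def by auto
  define \<epsilon> where "\<epsilon> = 1 / (2 * (\<bar>C\<bar> + 1))"
  have e0: "0 < \<epsilon>" by (simp add: \<epsilon>_def add_pos_nonneg)
  obtain \<alpha> \<beta> where ab: "0 < \<alpha>" "\<alpha> < \<beta>" "\<And>\<mu>. \<mu> \<in> {\<alpha>..\<beta>} \<Longrightarrow> \<bar>gg \<mu> - t\<bar> \<le> \<epsilon>"
    using approx_real[OF t e0] by blast
  define I where "I = {\<alpha>..\<beta>}"
  define ell where "ell \<mu> = of_real (\<sigma> * gg \<mu>) * cis (pi/4)" for \<mu>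
  have ellcont: "continuous_on UNIV ell"
    unfolding ell_def using gg_cont by (intro continuous_intros continuous_at_imp_continuous_on) auto
  have ellm[measurable]: "ell \<in> borel_measurable Mpos" by (rule meas_Mpos[OF ellcont])
  have sig2: "\<sigma>^2 = 1" by (simp add: \<sigma>_def)
  have ellsq: "ell \<mu> * ell \<mu> = Fpm \<mu> * Fmp \<mu>" for \<mu>
  proof -
    have "ell \<mu> * ell \<mu> = of_real (\<sigma>^2 * (gg \<mu>)^2) * (cis (pi/4))^2"
      unfolding ell_def by (simp add: power2_eq_square algebra_simps)
    also have "\<dots> = \<i> / complex_of_real (2 * cosh (pi * \<mu>))"
      by (simp add: sig2 gg_sq cis4_sq)
    finally show ?thesis by (simp add: FF)
  qed
  have ellnorm2: "(cmod (ell \<mu>))^2 = 1 / (2 * cosh (pi * \<mu>))" for \<mu>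
  proof -
    have "cmod (ell \<mu>) = \<bar>\<sigma> * gg \<mu>\<bar>" by (simp add: ell_def norm_mult abs_mult)
    hence "(cmod (ell \<mu>))^2 = (\<sigma> * gg \<mu>)^2" by simp
    also have "\<dots> = \<sigma>^2 * (gg \<mu>)^2" by (rule power_mult_distrib)
    finally show ?thesis by (simp add: sig2 gg_sq)
  qed
  have ellle: "(cmod (ell \<mu>))^2 \<le> 1" for \<mu>
    unfolding ellnorm2 using cosh_real_ge_1[of "pi*\<mu>"] by simp
  have ellclose: "cmod (ell \<mu> - lam) \<le> \<epsilon>" if "\<mu> \<in> I" for \<mu>
  proof -
    have "ell \<mu> - lam = of_real (\<sigma> * (gg \<mu> - t)) * cis (pi/4)"
      unfolding ell_def lam_eq by (simp add: algebra_simps)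
    hence "cmod (ell \<mu> - lam) = \<bar>gg \<mu> - t\<bar>" by (simp add: norm_mult abs_mult \<sigma>_def del: of_real_diff flip: of_real_diff)
    thus ?thesis using ab(3) that I_def by simp
  qed
  define y :: mvec where "y = ((\<lambda>\<mu>. if \<mu> \<in> I then Fpm \<mu> else 0), (\<lambda>\<mu>. if \<mu> \<in> I then ell \<mu> else 0))"
  have Iint: "integrable Mpos (indicator I :: real \<Rightarrow> real)" "(\<integral>x. indicator I x \<partial>Mpos) = \<beta> - \<alpha>"
    using indicator_Mpos[of \<alpha> \<beta>] ab unfolding I_def by auto
  have y1m[measurable]: "fst y \<in> borel_measurable Mpos" unfolding y_def I_def by simp measurable
  have y2m[measurable]: "snd y \<in> borel_measurable Mpos" unfolding y_def I_def by simp measurable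
  have y1: "fst y \<in> L2pos"
    using L2_bound(1)[OF Iint(1) y1m] normFpm_le
    by (force simp: y_def indicator_def abs_le_square_iff power_le_one)
  have y2: "snd y \<in> L2pos"
    using L2_bound(1)[OF Iint(1) y2m] ellle by (force simp: y_def indicator_def)
  have yM: "y \<in> Mspace" using y1 y2 by (simp add: Mspace_def)
  define z where "z = madd (MF y) (mscale (- lam) y)"
  have z1: "fst z \<mu> = (if \<mu> \<in> I then (ell \<mu> - lam) * Fpm \<mu> else 0)" for \<mu>
    unfolding z_def madd_def MF_def mscale_def y_def by (simp add: algebra_simps)
  have z2: "snd z \<mu> = (if \<mu> \<in> I then (ell \<mu> - lam) * ell \<mu> else 0)" for \<mu>
    unfolding z_def madd_def MF_def mscale_def y_def using ellsq[of \<mu>]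
    by (simp add: algebra_simps)
  have z1m[measurable]: "fst z \<in> borel_measurable Mpos" unfolding z_def madd_def MF_def mscale_def by simp measurable
  have z2m[measurable]: "snd z \<in> borel_measurable Mpos" unfolding z_def madd_def MF_def mscale_def by simp measurable
  have b1: "(cmod (fst z \<mu>))^2 \<le> \<epsilon>^2 * (cmod (fst y \<mu>))^2" for \<mu>
  proof (cases "\<mu> \<in> I")
    case True
    have "cmod (fst z \<mu>) \<le> \<epsilon> * cmod (fst y \<mu>)"
      using True ellclose[OF True] by (simp add: z1 y_def norm_mult mult_right_mono)
    hence "(cmod (fst z \<mu>))^2 \<le> (\<epsilon> * cmod (fst y \<mu>))^2" by (intro power_mono) auto
    thus ?thesis by (simp add: power_mult_distrib)
  qed (simp add: z1 y_def)
  have b2: "(cmod (snd z \<mu>))^2 \<le> \<epsilon>^2 * (cmod (snd y \<mu>))^2" for \<mu>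
  proof (cases "\<mu> \<in> I")
    case True
    have "cmod (snd z \<mu>) \<le> \<epsilon> * cmod (snd y \<mu>)"
      using True ellclose[OF True] by (simp add: z2 y_def norm_mult mult_right_mono)
    hence "(cmod (snd z \<mu>))^2 \<le> (\<epsilon> * cmod (snd y \<mu>))^2" by (intro power_mono) auto
    thus ?thesis by (simp add: power_mult_distrib)
  qed (simp add: z2 y_def)
  have hi1: "integrable Mpos (\<lambda>\<mu>. \<epsilon>^2 * (cmod (fst y \<mu>))^2)" using sq_integrable[OF y1] by simp
  have hi2: "integrable Mpos (\<lambda>\<mu>. \<epsilon>^2 * (cmod (snd y \<mu>))^2)" using sq_integrable[OF y2] by simp
  note Z1 = L2_bound[OF hi1 z1m b1]
  note Z2 = L2_bound[OF hi2 z2m b2]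
  have zM: "z \<in> Mspace" using Z1(1) Z2(1) by (simp add: Mspace_def)
  define Y1 where "Y1 = (\<integral>x. (cmod (fst y x))\<^sup>2 \<partial>Mpos)"
  define Y2 where "Y2 = (\<integral>x. (cmod (snd y x))\<^sup>2 \<partial>Mpos)"
  have "(\<integral>x. (cmod (fst z x))\<^sup>2 \<partial>Mpos) + (\<integral>x. (cmod (snd z x))\<^sup>2 \<partial>Mpos) \<le> \<epsilon>^2 * (Y1 + Y2)"
    using Z1(2) Z2(2) unfolding Y1_def Y2_def by (simp add: distrib_left)
  hence "mnorm z \<le> sqrt (\<epsilon>^2 * (Y1 + Y2))" unfolding mnorm_def by simp
  also have "\<dots> = \<epsilon> * mnorm y" unfolding mnorm_def Y1_def Y2_def using e0 by (simp add: real_sqrt_mult)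
  finally have zle: "mnorm z \<le> \<epsilon> * mnorm y" .
  define c0 where "c0 = 1 / (2 * cosh (pi * \<beta>))"
  have c0: "0 < c0" by (simp add: c0_def)
  have lowb: "c0 * indicator I \<mu> \<le> (cmod (snd y \<mu>))^2" for \<mu>
  proof (cases "\<mu> \<in> I")
    case True
    hence "cosh (pi * \<mu>) \<le> cosh (pi * \<beta>)" using ab(1) unfolding I_def
      by (subst cosh_real_nonneg_le_iff) auto
    hence "c0 \<le> 1 / (2 * cosh (pi * \<mu>))" unfolding c0_def
      by (intro divide_left_mono) (auto intro!: mult_pos_pos)
    thus ?thesis using True by (simp add: y_def ellnorm2)
  qed (simp add: y_def)
  have "c0 * (\<beta> - \<alpha>) = (\<integral>x. c0 * indicator I x \<partial>Mpos)" using Iint(2) by simp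
  also have "\<dots> \<le> Y2" unfolding Y2_def
    using lowb Iint(1) sq_integrable[OF y2] by (intro integral_mono) auto
  finally have "0 < Y2" using c0 ab(2) by (smt (verit) mult_pos_pos)
  moreover have "0 \<le> Y1" unfolding Y1_def by simp
  ultimately have "0 < Y1 + Y2" by linarith
  moreover have "mnorm y = sqrt (Y1 + Y2)" by (simp add: mnorm_def Y1_def Y2_def)
  ultimately have ypos: "0 < mnorm y" by simp
  have "mnorm (S z) = mnorm y" using meq_mnorm[OF Sinv[OF yM, folded z_def] Sm[OF zM] yM] .
  hence "mnorm y \<le> C * mnorm z" using SC[OF zM] by simp
  also have "\<dots> \<le> \<bar>C\<bar> * mnorm z" by (simp add: mult_right_mono mnorm_def)
  also have "\<dots> \<le> \<bar>C\<bar> * (\<epsilon> * mnorm y)" using zle by (intro mult_left_mono) auto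
  also have "\<dots> = (\<bar>C\<bar> / (2 * (\<bar>C\<bar> + 1))) * mnorm y" by (simp add: \<epsilon>_def)
  also have "\<dots> \<le> (1/2) * mnorm y" using ypos by (intro mult_right_mono) (auto simp: field_simps)
  finally show False using ypos by simp
qed


theorem theorem4p3:
  shows "MF_spectrum = closed_segment (- (cis (pi / 4) / complex_of_real (sqrt 2))) (cis (pi / 4) / complex_of_real (sqrt 2))"
proof -
  have "lam \<in> MF_spectrum \<longleftrightarrow> lam \<in> closed_segment (- cc) cc" for lam
    using inside_not_resolvent[of lam] resolvent_outside[of lam] unfolding MF_spectrum_def by blast
  thus ?thesis unfolding cc_def by blast
qed

end
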